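(* Let ${\bf L}\in\mathbb{S}^d_{+}$ and let ${\bf S}$ be a random matrix with values in $\mathbb{S}^d_+$ and $\mathbb{E}[{\bf S}]={\bf I}_d$ (with finite second moments). Then the optimization problem $$\text{minimize } \log\det({\bf D}^{-1})\quad\text{subject to}\quad \mathbb{E}[{\bf S}{\bf D}{\bf L}{\bf D}{\bf S}]\preceq{\bf D},\quad {\bf D}\in\mathbb{S}^d_{++}$$ is a convex optimization problem with a convex constraint; in particular the set $\{{\bf D}\in\mathbb{S}^d_{++}:\mathbb{E}[{\bf S}{\bf D}{\bf L}{\bf D}{\bf S}]\preceq{\bf D}\}$ is convex.
   Context: $\mathbb{S}^d_{+}$ (resp. $\mathbb{S}^d_{++}$) denotes the set of $d\times d$ symmetric positive semidefinite (resp. positive definite) matrices; $\preceq$ is the Loewner order. *)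

theory Defs
  imports "HOL-Probability.Probability"
begin

definition psd_mat :: "real^'n^'n \<Rightarrow> bool" where
  "psd_mat A \<longleftrightarrow> transpose A = A \<and> (\<forall>x. 0 \<le> x \<bullet> (A *v x))"

definition pd_mat :: "real^'n^'n \<Rightarrow> bool" where
  "pd_mat A \<longleftrightarrow> transpose A = A \<and> (\<forall>x. x \<noteq> 0 \<longrightarrow> 0 < x \<bullet> (A *v x))"

definition loewner_le :: "real^'n^'n \<Rightarrow> real^'n^'n \<Rightarrow> bool" where
  "loewner_le A B \<longleftrightarrow> psd_mat (B - A)"

end

theory Submission
  imports Defs
begin

lemma symm_inner: "transpose A = A \<Longrightarrow> x \<bullet> ((A::real^'n^'n) *v y) = y \<bullet> (A *v x)"
  by (metis dot_lmul_matrix inner_commute transpose_matrix_vector)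

lemma cont_q: "continuous_on S (\<lambda>x. x \<bullet> ((A::real^'n^'n) *v x))"
  by (intro continuous_intros)

lemma entry: "(transpose P ** X ** P) $ i $ j = column i P \<bullet> ((X::real^'n^'n) *v column j P)"
  by (simp add: matrix_matrix_mult_def matrix_vector_mult_def inner_vec_def column_def transpose_def
      sum_distrib_left sum_distrib_right mult.assoc mult.left_commute) (rule sum.swap)

lemma q_scale: "(a *\<^sub>R x) \<bullet> ((A::real^'n^'n) *v (a *\<^sub>R x)) = a^2 * (x \<bullet> (A *v x))"
  by (simp add: matrix_vector_mult_scaleR power2_eq_square)

lemma q_add:
  assumes "transpose A = A"
  shows "(x + y) \<bullet> ((A::real^'n^'n) *v (x + y)) = x \<bullet> (A *v x) + 2 * (y \<bullet> (A *v x)) + y \<bullet> (A *v y)"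
  using symm_inner[OF assms, of x y]
  by (simp add: matrix_vector_right_distrib inner_add_left inner_add_right)

lemma pd_coercive:
  assumes "pd_mat (A::real^'n^'n)"
  obtains c where "c > 0" "\<And>x. c * (norm x)^2 \<le> x \<bullet> (A *v x)"
proof -
  have "compact (sphere (0::real^'n) 1)" by simp
  moreover have "sphere (0::real^'n) 1 \<noteq> {}" by simp
  ultimately obtain v where v: "v \<in> sphere 0 1" "\<forall>y\<in>sphere 0 1. v \<bullet> (A *v v) \<le> y \<bullet> (A *v y)"
    using continuous_attains_inf[OF _ _ cont_q] by blast
  have v0: "v \<noteq> 0" using v by auto
  have cpos: "v \<bullet> (A *v v) > 0" using v0 assms unfolding pd_mat_def by auto
  have "v \<bullet> (A *v v) * (norm x)^2 \<le> x \<bullet> (A *v x)" for x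
  proof (cases "x = 0")
    case True then show ?thesis by simp
  next
    case False
    have "(inverse (norm x) *\<^sub>R x) \<in> sphere 0 1" using False by simp
    with v have "v \<bullet> (A *v v) \<le> (inverse (norm x))^2 * (x \<bullet> (A *v x))"
      using q_scale by metis
    then have "v \<bullet> (A *v v) * (norm x)^2 \<le> (inverse (norm x))^2 * (x \<bullet> (A *v x)) * (norm x)^2"
      by (simp add: mult_right_mono)
    also have "\<dots> = x \<bullet> (A *v x)" using False by (simp add: power2_eq_square field_simps)
    finally show ?thesis .
  qed
  then show ?thesis using that cpos by blast
qed

lemma s_trick:
  fixes a C :: real
  assumes "\<And>s. 2 * s * a \<le> s^2 * C"
  shows "a = 0"
proof -
  let ?s = "a / (\<bar>C\<bar> + 1)"
  have p: "\<bar>C\<bar> + 1 > 0" by simp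
  have "2 * ?s * a \<le> ?s^2 * C" by (rule assms)
  then have "2 * ?s * a * (\<bar>C\<bar> + 1)^2 \<le> ?s^2 * C * (\<bar>C\<bar> + 1)^2"
    by (rule mult_right_mono[OF _ zero_le_power2])
  moreover have e: "?s * (\<bar>C\<bar> + 1) = a" using p by simp
  moreover have "2 * ?s * a * (\<bar>C\<bar> + 1)^2 = 2 * a^2 * (\<bar>C\<bar> + 1)"
    by (metis (no_types, lifting) e mult.assoc mult.commute power2_eq_square)
  moreover have "?s^2 * C * (\<bar>C\<bar> + 1)^2 = a^2 * C"
    by (metis e mult.commute mult.left_commute power_mult_distrib)
  ultimately have "2 * a^2 * (\<bar>C\<bar> + 1) \<le> a^2 * C" by simp
  moreover have "a^2 * C \<le> a^2 * \<bar>C\<bar>" by (simp add: mult_left_mono)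
  ultimately have "a^2 * (\<bar>C\<bar> + 2) \<le> 0" by (simp add: algebra_simps)
  then have "a^2 \<le> 0" by (smt (verit) mult_nonneg_nonneg zero_le_power2 abs_ge_zero mult_pos_pos)
  then show ?thesis by simp
qed

lemma simdiag_ind:
  fixes A B :: "real^'n^'n"
  assumes A: "pd_mat A" and B: "transpose B = B"
  shows "k \<le> CARD('n) \<Longrightarrow> \<exists>F. finite F \<and> card F = k
     \<and> (\<forall>f\<in>F. \<forall>g\<in>F. f \<bullet> (A *v g) = (if f = g then 1 else 0) \<and> (f \<noteq> g \<longrightarrow> f \<bullet> (B *v g) = 0))
     \<and> (\<forall>x. (\<forall>f\<in>F. x \<bullet> (A *v f) = 0) \<longrightarrow> (\<forall>f\<in>F. x \<bullet> (B *v f) = 0))"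
proof (induction k)
  case 0
  show ?case by (intro exI[of _ "{}"]) simp
next
  case (Suc k)
  have As: "transpose A = A" using A unfolding pd_mat_def by simp
  from Suc obtain F where F: "finite F" "card F = k"
    and orth: "\<forall>f\<in>F. \<forall>g\<in>F. f \<bullet> (A *v g) = (if f = g then 1 else 0) \<and> (f \<noteq> g \<longrightarrow> f \<bullet> (B *v g) = 0)"
    and inv: "\<forall>x. (\<forall>f\<in>F. x \<bullet> (A *v f) = 0) \<longrightarrow> (\<forall>f\<in>F. x \<bullet> (B *v f) = 0)"
    by auto
  define V where "V = {x. \<forall>f\<in>F. x \<bullet> (A *v f) = 0}"
  have V_add: "x + y \<in> V" if "x \<in> V" "y \<in> V" for x y
    using that by (simp add: V_def inner_add_left)
  have V_scale: "a *\<^sub>R x \<in> V" if "x \<in> V" for x a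
    using that by (simp add: V_def)
  have "dim ((\<lambda>f. A *v f) ` F) \<le> card ((\<lambda>f. A *v f) ` F)"
    using F(1) dim_le_card' by blast
  also have "\<dots> \<le> k" using F card_image_le by blast
  also have "\<dots> < DIM(real^'n)" using Suc.prems by simp
  finally obtain u where u: "u \<noteq> 0" "\<And>y. y \<in> span ((\<lambda>f. A *v f) ` F) \<Longrightarrow> orthogonal u y"
    using orthogonal_to_subspace_exists by blast
  have uV: "u \<in> V" unfolding V_def using u(2) by (auto simp: orthogonal_def span_base)
  obtain c where c: "c > 0" "\<And>x. c * (norm x)^2 \<le> x \<bullet> (A *v x)" using pd_coercive[OF A] by blast
  define K where "K = {x \<in> V. x \<bullet> (A *v x) = 1}"
  have "V = (\<Inter>f\<in>F. {x. (A *v f) \<bullet> x = 0})" by (auto simp: V_def inner_commute)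
  then have closedV: "closed V" by (simp add: closed_INT closed_hyperplane)
  have "closed K" unfolding K_def
    using closedV by (intro continuous_closed_preimage_constant cont_q)
  moreover have "bounded K"
  proof -
    have "norm x \<le> 1 / sqrt c" if "x \<in> K" for x
    proof -
      have "c * (norm x)^2 \<le> 1" using c(2)[of x] that by (simp add: K_def)
      then have "(norm x)^2 \<le> 1 / c" using c(1) by (simp add: field_simps)
      then have "sqrt ((norm x)^2) \<le> sqrt (1 / c)" using real_sqrt_le_mono by blast
      then show ?thesis by (simp add: real_sqrt_divide)
    qed
    then show ?thesis unfolding bounded_iff by blast
  qed
  ultimately have "compact K" using compact_eq_bounded_closed by blast
  have quA: "u \<bullet> (A *v u) > 0" using u(1) A unfolding pd_mat_def by auto
  define u' where "u' = inverse (sqrt (u \<bullet> (A *v u))) *\<^sub>R u"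
  have "u' \<bullet> (A *v u') = 1" unfolding u'_def q_scale using quA by (simp add: power_inverse)
  then have "u' \<in> K" unfolding K_def using uV V_scale u'_def by simp
  then have "K \<noteq> {}" by blast
  then obtain v where vK: "v \<in> K" and vmax: "\<forall>y\<in>K. y \<bullet> (B *v y) \<le> v \<bullet> (B *v v)"
    using continuous_attains_sup[OF \<open>compact K\<close> _ cont_q] by blast
  define lam where "lam = v \<bullet> (B *v v)"
  have vV: "v \<in> V" and vA: "v \<bullet> (A *v v) = 1" using vK by (auto simp: K_def)
  have claim1: "x \<bullet> (B *v x) \<le> lam * (x \<bullet> (A *v x))" if "x \<in> V" for x
  proof (cases "x = 0")
    case True then show ?thesis by simp
  next
    case False
    have qa: "x \<bullet> (A *v x) > 0" using False A unfolding pd_mat_def by auto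
    define y where "y = inverse (sqrt (x \<bullet> (A *v x))) *\<^sub>R x"
    have "y \<bullet> (A *v y) = 1" unfolding y_def q_scale using qa by (simp add: power_inverse)
    then have "y \<in> K" unfolding K_def using that V_scale y_def by simp
    then have "y \<bullet> (B *v y) \<le> lam" using vmax lam_def by blast
    then have "inverse (x \<bullet> (A *v x)) * (x \<bullet> (B *v x)) \<le> lam"
      unfolding y_def q_scale using qa by (simp add: power_inverse)
    then show ?thesis using qa by (simp add: field_simps)
  qed
  have claim2: "w \<bullet> (B *v v) = lam * (w \<bullet> (A *v v))" if "w \<in> V" for w
  proof -
    let ?a = "w \<bullet> (B *v v) - lam * (w \<bullet> (A *v v))"
    let ?C = "lam * (w \<bullet> (A *v w)) - w \<bullet> (B *v w)"
    have "2 * s * ?a \<le> s^2 * ?C" for s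
    proof -
      have "v + s *\<^sub>R w \<in> V" using vV that V_add V_scale by blast
      then have "(v + s *\<^sub>R w) \<bullet> (B *v (v + s *\<^sub>R w)) \<le> lam * ((v + s *\<^sub>R w) \<bullet> (A *v (v + s *\<^sub>R w)))"
        by (rule claim1)
      then show ?thesis unfolding q_add[OF B] q_add[OF As] q_scale
        using vA lam_def by (simp add: matrix_vector_mult_scaleR algebra_simps power2_eq_square)
    qed
    then have "?a = 0" by (rule s_trick)
    then show ?thesis by simp
  qed
  have vF: "v \<notin> F"
  proof
    assume "v \<in> F"
    then have "v \<bullet> (A *v v) = 0" using vV by (auto simp: V_def)
    then show False using vA by simp
  qed
  show ?case
  proof (intro exI[of _ "insert v F"] conjI)
    show "finite (insert v F)" using F by simp
    show "card (insert v F) = Suc k" using F vF by simp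
    show "\<forall>f\<in>insert v F. \<forall>g\<in>insert v F. f \<bullet> (A *v g) = (if f = g then 1 else 0) \<and> (f \<noteq> g \<longrightarrow> f \<bullet> (B *v g) = 0)"
    proof (intro ballI)
      fix f g assume f: "f \<in> insert v F" and g: "g \<in> insert v F"
      have vAf: "v \<bullet> (A *v h) = 0" "h \<bullet> (A *v v) = 0" if "h \<in> F" for h
        using vV that symm_inner[OF As, of v h] by (auto simp: V_def)
      have vBf: "v \<bullet> (B *v h) = 0" "h \<bullet> (B *v v) = 0" if "h \<in> F" for h
        using inv vV that symm_inner[OF B, of v h] by (auto simp: V_def)
      show "f \<bullet> (A *v g) = (if f = g then 1 else 0) \<and> (f \<noteq> g \<longrightarrow> f \<bullet> (B *v g) = 0)"
        using f g orth vAf vBf vA vF by auto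
    qed
    show "\<forall>x. (\<forall>f\<in>insert v F. x \<bullet> (A *v f) = 0) \<longrightarrow> (\<forall>f\<in>insert v F. x \<bullet> (B *v f) = 0)"
    proof (intro allI impI)
      fix x assume x: "\<forall>f\<in>insert v F. x \<bullet> (A *v f) = 0"
      then have "x \<in> V" by (simp add: V_def)
      then show "\<forall>f\<in>insert v F. x \<bullet> (B *v f) = 0"
        using inv x claim2[of x] by (auto simp: V_def)
    qed
  qed
qed


lemma simdiag:
  fixes A B :: "real^'n^'n"
  assumes "pd_mat A" "transpose B = B"
  obtains P :: "real^'n^'n" where "transpose P ** A ** P = mat 1" "\<And>i j. i \<noteq> j \<Longrightarrow> (transpose P ** B ** P)$i$j = 0"
proof -
  obtain F where F: "finite F" "card F = CARD('n)"
    and orth: "\<forall>f\<in>F. \<forall>g\<in>F. f \<bullet> (A *v g) = (if f = g then 1 else 0) \<and> (f \<noteq> g \<longrightarrow> f \<bullet> (B *v g) = 0)"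
    using simdiag_ind[OF assms order_refl] by blast
  obtain b where b: "bij_betw b (UNIV::'n set) F" using finite_same_card_bij[of "UNIV::'n set" F] F by auto
  define P where "P = (\<chi> i j. b j $ i)"
  have col: "column j P = b j" for j by (simp add: P_def column_def vec_eq_iff)
  have bF: "b j \<in> F" for j using b bij_betwE by blast
  have inj: "b i = b j \<longleftrightarrow> i = j" for i j using b by (metis bij_betw_imp_inj_on inj_onD UNIV_I)
  have "(transpose P ** A ** P)$i$j = (mat 1::real^'n^'n)$i$j" for i j
    by (simp add: entry col mat_def orth bF inj)
  then have "transpose P ** A ** P = mat 1" by (simp add: vec_eq_iff)
  moreover have "(transpose P ** B ** P)$i$j = 0" if "i \<noteq> j" for i j
    using that by (simp add: entry col orth bF inj)
  ultimately show ?thesis using that by blast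
qed

lemma congr_det: "det (transpose P ** X ** P) = (det P)^2 * det (X::real^'n^'n)" for P :: "real^'n^'n"
  by (simp add: det_mul power2_eq_square)

lemma entry_lin: "(transpose P ** (u *\<^sub>R A + v *\<^sub>R B) ** P) $ i $ j
   = u * (transpose P ** A ** P) $ i $ j + v * (transpose P ** (B::real^'n^'n) ** P) $ i $ j"
  by (simp add: entry matrix_vector_mult_add_rdistrib scaleR_matrix_vector_assoc[symmetric] inner_add_right)

lemma logdet:
  fixes A B :: "real^'n^'n"
  assumes A: "pd_mat A" and B: "pd_mat B" and u: "u \<ge> 0" and v: "v \<ge> 0" and uv: "u + v = 1"
  shows "0 < det A \<and> 0 < det B \<and> 0 < det (u *\<^sub>R A + v *\<^sub>R B)
     \<and> u * ln (det A) + v * ln (det B) \<le> ln (det (u *\<^sub>R A + v *\<^sub>R B))"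
proof -
  have Bs: "transpose B = B" using B by (simp add: pd_mat_def)
  obtain P :: "real^'n^'n" where PA: "transpose P ** A ** P = mat 1"
    and PB: "\<And>i j. i \<noteq> j \<Longrightarrow> (transpose P ** B ** P)$i$j = 0"
    using simdiag[OF A Bs] by blast
  define \<beta> where "\<beta> i = (transpose P ** B ** P)$i$i" for i
  define p where "p = (det P)^2"
  have hA: "p * det A = 1" using congr_det[of P A] PA by (simp add: p_def)
  have "det (transpose P ** B ** P) = (\<Prod>i\<in>UNIV. \<beta> i)"
    unfolding \<beta>_def by (rule det_diagonal[OF PB])
  then have hB: "p * det B = (\<Prod>i\<in>UNIV. \<beta> i)"
    using congr_det[of P B] by (simp add: p_def)
  have hC: "p * det (u *\<^sub>R A + v *\<^sub>R B) = (\<Prod>i\<in>UNIV. u + v * \<beta> i)"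
  proof -
    have e: "(transpose P ** (u *\<^sub>R A + v *\<^sub>R B) ** P) $ i $ j = (if i = j then u + v * \<beta> i else 0)" for i j
      unfolding entry_lin PA \<beta>_def using PB[of i j] by (simp add: mat_def)
    have "det (transpose P ** (u *\<^sub>R A + v *\<^sub>R B) ** P) = (\<Prod>i\<in>UNIV. (transpose P ** (u *\<^sub>R A + v *\<^sub>R B) ** P) $ i $ i)"
      by (rule det_diagonal) (simp add: e)
    also have "\<dots> = (\<Prod>i\<in>UNIV. u + v * \<beta> i)" by (simp add: e)
    finally have "det (transpose P ** (u *\<^sub>R A + v *\<^sub>R B) ** P) = (\<Prod>i\<in>UNIV. u + v * \<beta> i)" .
    then show ?thesis using congr_det[of P "u *\<^sub>R A + v *\<^sub>R B"] by (simp add: p_def)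
  qed
  have bpos: "\<beta> i > 0" for i
  proof -
    have "column i P \<bullet> (A *v column i P) = (transpose P ** A ** P)$i$i" by (simp add: entry)
    also have "\<dots> = 1" by (simp add: PA mat_def)
    finally have "column i P \<bullet> (A *v column i P) = 1" .
    then have "column i P \<noteq> 0" by auto
    then show ?thesis using B by (simp add: pd_mat_def \<beta>_def entry)
  qed
  have "p \<noteq> 0" using hA by auto
  moreover have "p \<ge> 0" by (simp add: p_def)
  ultimately have ppos: "p > 0" by simp
  have dA: "det A = 1 / p" using hA ppos by (simp add: field_simps)
  have prodpos: "(\<Prod>i\<in>UNIV. \<beta> i) > 0" using bpos by (simp add: prod_pos)
  have upos: "u + v * \<beta> i > 0" for i
  proof (cases "v = 0")
    case True then show ?thesis using uv by simp
  next
    case False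
    then have "v * \<beta> i > 0" using v bpos[of i] by simp
    then show ?thesis using u by simp
  qed
  have prodpos2: "(\<Prod>i\<in>UNIV. u + v * \<beta> i) > 0" using upos by (simp add: prod_pos)
  have dB: "det B = (\<Prod>i\<in>UNIV. \<beta> i) / p" using hB ppos by (simp add: field_simps)
  have dC: "det (u *\<^sub>R A + v *\<^sub>R B) = (\<Prod>i\<in>UNIV. u + v * \<beta> i) / p" using hC ppos by (simp add: field_simps)
  have lnb: "v * ln (\<beta> i) \<le> ln (u + v * \<beta> i)" for i
  proof -
    have u1: "u = 1 - v" using uv by simp
    have "(1 - v) * ln 1 + v * ln (\<beta> i) \<le> ln ((1 - v) *\<^sub>R 1 + v *\<^sub>R \<beta> i)"
      by (rule concave_onD[OF ln_concave]) (use v uv u bpos[of i] in auto)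
    then have "v * ln (\<beta> i) \<le> ln (u + v * \<beta> i)" unfolding u1 by simp
    then show ?thesis by simp
  qed
  have s1: "v * (\<Sum>i\<in>UNIV. ln (\<beta> i)) \<le> (\<Sum>i\<in>UNIV. ln (u + v * \<beta> i))"
    by (simp add: sum_distrib_left sum_mono lnb)
  have s2: "ln (\<Prod>i\<in>UNIV. \<beta> i) = (\<Sum>i\<in>UNIV. ln (\<beta> i))" using bpos by (intro ln_prod) (auto simp: less_imp_neq[symmetric] dual_order.strict_implies_not_eq)
  have s3: "ln (\<Prod>i\<in>UNIV. u + v * \<beta> i) = (\<Sum>i\<in>UNIV. ln (u + v * \<beta> i))"
    using upos by (intro ln_prod) (auto simp: dual_order.strict_implies_not_eq)
  have main: "u * ln (1 / p) + v * ln ((\<Prod>i\<in>UNIV. \<beta> i) / p) \<le> ln ((\<Prod>i\<in>UNIV. u + v * \<beta> i) / p)"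
  proof -
    have l1: "ln (1 / p) = - ln p" using ppos by (simp add: ln_div)
    have l2: "ln ((\<Prod>i\<in>UNIV. \<beta> i) / p) = ln (\<Prod>i\<in>UNIV. \<beta> i) - ln p" by (rule ln_divide_pos[OF prodpos ppos])
    have l3: "ln ((\<Prod>i\<in>UNIV. u + v * \<beta> i) / p) = ln (\<Prod>i\<in>UNIV. u + v * \<beta> i) - ln p" by (rule ln_divide_pos[OF prodpos2 ppos])
    have l4: "u * ln p + v * ln p = ln p" by (metis uv distrib_right mult_1)
    show ?thesis unfolding l1 l2 l3 using s1 s2 s3 l4 by (simp add: right_diff_distrib)
  qed
  show ?thesis using main dA dB dC ppos prodpos prodpos2 by simp
qed


lemma cont_SKS: "continuous_on UNIV (\<lambda>X::real^'n^'n. X ** K ** X)"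
proof -
  have eq: "(\<lambda>X::real^'n^'n. X ** K ** X) = (\<lambda>X. \<chi> a b. \<Sum>j\<in>UNIV. (\<Sum>i\<in>UNIV. X$a$i * K$i$j) * X$j$b)"
    by (simp add: matrix_matrix_mult_def)
  show ?thesis unfolding eq by (intro continuous_intros)
qed

lemma entry_bound:
  fixes X K :: "real^'n^'n"
  shows "\<bar>(X ** K ** X)$a$b\<bar> \<le> (\<Sum>j\<in>UNIV. \<Sum>i\<in>UNIV. \<bar>K$i$j\<bar>) * (norm X)^2"
proof -
  have nx: "\<bar>X$p$q\<bar> \<le> norm X" for p q
    using component_le_norm_cart[of "X$p" q] Finite_Cartesian_Product.norm_nth_le[where x=X and i=p] by linarith
  have "\<bar>(X ** K ** X)$a$b\<bar> = \<bar>\<Sum>j\<in>UNIV. (\<Sum>i\<in>UNIV. X$a$i * K$i$j) * X$j$b\<bar>"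
    by (simp add: matrix_matrix_mult_def)
  also have "\<dots> \<le> (\<Sum>j\<in>UNIV. \<Sum>i\<in>UNIV. \<bar>X$a$i * K$i$j * X$j$b\<bar>)"
    by (rule order_trans[OF sum_abs sum_mono]) (simp add: sum_distrib_right order_trans[OF sum_abs])
  also have "\<dots> \<le> (\<Sum>j\<in>UNIV. \<Sum>i\<in>UNIV. \<bar>K$i$j\<bar> * (norm X)^2)"
  proof (intro sum_mono)
    fix i j
    have "\<bar>X$a$i * K$i$j * X$j$b\<bar> = \<bar>K$i$j\<bar> * (\<bar>X$a$i\<bar> * \<bar>X$j$b\<bar>)" by (simp add: abs_mult)
    also have "\<dots> \<le> \<bar>K$i$j\<bar> * (norm X * norm X)"
      by (intro mult_left_mono mult_mono nx) auto
    finally show "\<bar>X$a$i * K$i$j * X$j$b\<bar> \<le> \<bar>K$i$j\<bar> * (norm X)^2" by (simp add: power2_eq_square)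
  qed
  also have "\<dots> = (\<Sum>j\<in>UNIV. \<Sum>i\<in>UNIV. \<bar>K$i$j\<bar>) * (norm X)^2" by (simp add: sum_distrib_right)
  finally show ?thesis .
qed

lemma norm_SKS:
  fixes X K :: "real^'n^'n"
  shows "norm (X ** K ** X) \<le> (real CARD('n))^2 * (\<Sum>j\<in>UNIV. \<Sum>i\<in>UNIV. \<bar>K$i$j\<bar>) * (norm X)^2"
proof -
  let ?c = "(\<Sum>j\<in>UNIV. \<Sum>i\<in>UNIV. \<bar>K$i$j\<bar>) * (norm X)^2"
  have "norm (X ** K ** X) \<le> (\<Sum>a\<in>UNIV. norm ((X ** K ** X)$a))" by (simp add: norm_vec_def L2_set_le_sum)
  also have "\<dots> \<le> (\<Sum>a\<in>(UNIV::'n set). \<Sum>b\<in>(UNIV::'n set). ?c)"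
    by (intro sum_mono order_trans[OF norm_le_l1_cart] entry_bound)
  also have "\<dots> = (real CARD('n))^2 * ?c" by (simp add: power2_eq_square)
  finally show ?thesis by (simp add: mult.assoc)
qed

lemma int_SKS:
  fixes S :: "'a \<Rightarrow> real^'n^'n"
  assumes "S \<in> borel_measurable M" "integrable M (\<lambda>\<omega>. (norm (S \<omega>))^2)"
  shows "integrable M (\<lambda>\<omega>. S \<omega> ** K ** S \<omega>)"
proof (rule Bochner_Integration.integrable_bound[where f="\<lambda>\<omega>. (real CARD('n))^2 * (\<Sum>j\<in>UNIV. \<Sum>i\<in>UNIV. \<bar>K$i$j\<bar>) * (norm (S \<omega>))^2"])
  show "integrable M (\<lambda>\<omega>. (real CARD('n))^2 * (\<Sum>j\<in>UNIV. \<Sum>i\<in>UNIV. \<bar>K$i$j\<bar>) * (norm (S \<omega>))^2)"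
    using assms(2) by simp
  show "(\<lambda>\<omega>. S \<omega> ** K ** S \<omega>) \<in> borel_measurable M"
    using measurable_compose[OF assms(1) borel_measurable_continuous_onI[OF cont_SKS]] by simp
  show "AE \<omega> in M. norm (S \<omega> ** K ** S \<omega>) \<le> norm ((real CARD('n))^2 * (\<Sum>j\<in>UNIV. \<Sum>i\<in>UNIV. \<bar>K$i$j\<bar>) * (norm (S \<omega>))^2)"
    by (intro AE_I2 order_trans[OF norm_SKS]) simp
qed


lemma bl_q: "bounded_linear (\<lambda>X::real^'n^'n. x \<bullet> (X *v x))"
proof -
  have "linear (\<lambda>X::real^'n^'n. x \<bullet> (X *v x))"
    by (rule linearI) (simp_all add: matrix_vector_mult_add_rdistrib inner_add_right scaleR_matrix_vector_assoc[symmetric])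
  then show ?thesis by (simp add: linear_conv_bounded_linear)
qed

lemma bl_tr: "bounded_linear (transpose :: real^'n^'n \<Rightarrow> real^'n^'n)"
proof -
  have "linear (transpose :: real^'n^'n \<Rightarrow> real^'n^'n)"
    by (rule linearI) (simp_all add: transpose_def vec_eq_iff)
  then show ?thesis by (simp add: linear_conv_bounded_linear)
qed

lemma q_SKS:
  assumes "transpose S = S"
  shows "x \<bullet> ((S ** K ** S) *v x) = (S *v x) \<bullet> ((K::real^'n^'n) *v (S *v x))"
proof -
  have "x \<bullet> ((S ** K ** S) *v x) = x \<bullet> (S *v (K *v (S *v x)))"
    by (simp add: matrix_vector_mul_assoc matrix_mul_assoc)
  also have "\<dots> = (K *v (S *v x)) \<bullet> (S *v x)" by (rule symm_inner[OF assms])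
  finally show ?thesis by (simp add: inner_commute)
qed

lemma sym_SKS:
  assumes "transpose S = S" "transpose K = K"
  shows "transpose (S ** K ** S) = (S ** (K::real^'n^'n) ** S)"
  using assms by (simp add: matrix_transpose_mul matrix_mul_assoc)

context
  fixes M :: "'a measure" and S :: "'a \<Rightarrow> real^'n^'n"
  assumes Smeas: "S \<in> borel_measurable M"
    and Spsd: "\<forall>\<omega>\<in>space M. psd_mat (S \<omega>)"
    and Sint: "integrable M (\<lambda>\<omega>. (norm (S \<omega>))^2)"
begin

lemma Phi_sym:
  assumes "transpose K = K"
  shows "transpose (integral\<^sup>L M (\<lambda>\<omega>. S \<omega> ** K ** S \<omega>)) = integral\<^sup>L M (\<lambda>\<omega>. S \<omega> ** K ** S \<omega>)"
proof -
  have "transpose (integral\<^sup>L M (\<lambda>\<omega>. S \<omega> ** K ** S \<omega>)) = integral\<^sup>L M (\<lambda>\<omega>. transpose (S \<omega> ** K ** S \<omega>))"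
    by (rule integral_bounded_linear[OF bl_tr int_SKS[OF Smeas Sint], symmetric])
  also have "\<dots> = integral\<^sup>L M (\<lambda>\<omega>. S \<omega> ** K ** S \<omega>)"
    by (rule Bochner_Integration.integral_cong) (use Spsd assms sym_SKS in \<open>auto simp: psd_mat_def\<close>)
  finally show ?thesis .
qed

lemma Phi_q:
  "x \<bullet> (integral\<^sup>L M (\<lambda>\<omega>. S \<omega> ** K ** S \<omega>) *v x) = integral\<^sup>L M (\<lambda>\<omega>. (S \<omega> *v x) \<bullet> (K *v (S \<omega> *v x)))"
proof -
  have "x \<bullet> (integral\<^sup>L M (\<lambda>\<omega>. S \<omega> ** K ** S \<omega>) *v x) = integral\<^sup>L M (\<lambda>\<omega>. x \<bullet> ((S \<omega> ** K ** S \<omega>) *v x))"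
    by (rule integral_bounded_linear[OF bl_q int_SKS[OF Smeas Sint], symmetric])
  also have "\<dots> = integral\<^sup>L M (\<lambda>\<omega>. (S \<omega> *v x) \<bullet> (K *v (S \<omega> *v x)))"
    by (rule Bochner_Integration.integral_cong) (use Spsd in \<open>auto simp: psd_mat_def intro!: q_SKS\<close>)
  finally show ?thesis .
qed

lemma int_q: "integrable M (\<lambda>\<omega>. (S \<omega> *v x) \<bullet> (K *v (S \<omega> *v x)))"
proof -
  have "integrable M (\<lambda>\<omega>. x \<bullet> ((S \<omega> ** K ** S \<omega>) *v x))"
    by (rule integrable_bounded_linear[OF bl_q int_SKS[OF Smeas Sint]])
  then show ?thesis
    by (rule Bochner_Integration.integrable_cong[THEN iffD1, rotated -1]) (use Spsd in \<open>auto simp: psd_mat_def intro!: q_SKS\<close>)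
qed

end


lemma quad_convex:
  fixes L :: "real^'n^'n"
  assumes L: "psd_mat L" and u: "u \<ge> 0" and v: "v \<ge> 0" and uv: "u + v = 1"
  shows "(u *\<^sub>R a + v *\<^sub>R b) \<bullet> (L *v (u *\<^sub>R a + v *\<^sub>R b)) \<le> u * (a \<bullet> (L *v a)) + v * (b \<bullet> (L *v b))"
proof -
  have Ls: "transpose L = L" using L by (simp add: psd_mat_def)
  define P where "P = a \<bullet> (L *v a)"
  define Q where "Q = b \<bullet> (L *v b)"
  define R where "R = b \<bullet> (L *v a)"
  have R': "a \<bullet> (L *v b) = R" unfolding R_def by (rule symm_inner[OF Ls])
  have e1: "(u *\<^sub>R a + v *\<^sub>R b) \<bullet> (L *v (u *\<^sub>R a + v *\<^sub>R b)) = u^2 * P + 2 * u * v * R + v^2 * Q"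
    unfolding q_add[OF Ls] q_scale by (simp add: P_def Q_def R_def matrix_vector_mult_scaleR power2_eq_square)
  have e2: "(a - b) \<bullet> (L *v (a - b)) = P - 2 * R + Q"
    using R' by (simp add: P_def Q_def R_def matrix_vector_mult_diff_distrib inner_diff_left inner_diff_right)
  have "0 \<le> (a - b) \<bullet> (L *v (a - b))" using L by (simp add: psd_mat_def)
  then have nn: "0 \<le> u * v * (P - 2 * R + Q)" using u v e2 by simp
  have u1: "u = 1 - v" using uv by simp
  have "u * P + v * Q - (u^2 * P + 2 * u * v * R + v^2 * Q) = u * v * (P - 2 * R + Q)"
    unfolding u1 by (simp add: algebra_simps power2_eq_square)
  then show ?thesis unfolding e1 P_def[symmetric] Q_def[symmetric] using nn by linarith
qed


lemma transpose_add': "transpose (X + Y) = transpose X + transpose (Y::real^'n^'n)"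
  by (simp add: transpose_def vec_eq_iff)

lemma transpose_diff': "transpose (X - Y) = transpose X - transpose (Y::real^'n^'n)"
  by (simp add: transpose_def vec_eq_iff)

lemma q_comb: "x \<bullet> ((u *\<^sub>R A + v *\<^sub>R B) *v x) = u * (x \<bullet> (A *v x)) + v * (x \<bullet> ((B::real^'n^'n) *v x))"
  by (simp add: matrix_vector_mult_add_rdistrib inner_add_right scaleR_matrix_vector_assoc[symmetric])

lemma pd_comb:
  fixes A B :: "real^'n^'n"
  assumes A: "pd_mat A" and B: "pd_mat B" and u: "u \<ge> 0" and v: "v \<ge> 0" and uv: "u + v = 1"
  shows "pd_mat (u *\<^sub>R A + v *\<^sub>R B)"
  unfolding pd_mat_def
proof (intro conjI allI impI)
  show "transpose (u *\<^sub>R A + v *\<^sub>R B) = u *\<^sub>R A + v *\<^sub>R B"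
    using A B by (simp add: pd_mat_def transpose_add' transpose_scalar)
  fix x :: "real^'n" assume "x \<noteq> 0"
  then have a: "x \<bullet> (A *v x) > 0" and b: "x \<bullet> (B *v x) > 0" using A B by (auto simp: pd_mat_def)
  show "0 < x \<bullet> ((u *\<^sub>R A + v *\<^sub>R B) *v x)"
    unfolding q_comb
  proof (cases "u = 0")
    case True then show "0 < u * (x \<bullet> (A *v x)) + v * (x \<bullet> (B *v x))" using uv b by simp
  next
    case False then have "u > 0" using u by simp
    then show "0 < u * (x \<bullet> (A *v x)) + v * (x \<bullet> (B *v x))" using a b v
      by (simp add: add_pos_nonneg)
  qed
qed

lemma pd_det_pos: "pd_mat (D::real^'n^'n) \<Longrightarrow> det D > 0"
  using logdet[of D D 1 0] by simp

lemma det_matrix_inv':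
  assumes "det (D::real^'n^'n) \<noteq> 0"
  shows "det (matrix_inv D) = 1 / det D"
proof -
  have "invertible D" using assms invertible_det_nz by blast
  then have "\<exists>A'. D ** A' = mat 1 \<and> A' ** D = mat 1" by (simp add: invertible_def)
  then have "D ** matrix_inv D = mat 1" unfolding matrix_inv_def by (rule someI_ex[THEN conjunct1])
  then have "det D * det (matrix_inv D) = 1" by (metis det_mul det_I)
  then show ?thesis using assms by (simp add: field_simps)
qed

theorem proposition1:
  fixes M :: "'a measure" and S :: "'a \<Rightarrow> real^'n^'n" and L :: "real^'n^'n"
  assumes "prob_space M"
    and "psd_mat L"
    and "S \<in> borel_measurable M"
    and "\<forall>\<omega>\<in>space M. psd_mat (S \<omega>)"
    and "integrable M (\<lambda>\<omega>. (norm (S \<omega>))^2)"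
    and "integral\<^sup>L M S = mat 1"
  shows "convex_on {D :: real^'n^'n. pd_mat D} (\<lambda>D. ln (det (matrix_inv D)))
         \<and> convex {D. pd_mat D \<and>
              loewner_le (integral\<^sup>L M (\<lambda>\<omega>. S \<omega> ** D ** L ** D ** S \<omega>)) D}"
proof
  note Smeas = assms(3) and Spsd = assms(4) and Sint = assms(5) and L = assms(2)
  have Ls: "transpose L = L" using L by (simp add: psd_mat_def)
  have lnid: "ln (det (matrix_inv D)) = - ln (det D)" if "pd_mat D" for D :: "real^'n^'n"
  proof -
    have "det D > 0" using pd_det_pos[OF that] .
    then show ?thesis by (simp add: det_matrix_inv' ln_div)
  qed
  show "convex_on {D :: real^'n^'n. pd_mat D} (\<lambda>D. ln (det (matrix_inv D)))"
    unfolding convex_on_def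
  proof (intro conjI ballI allI impI)
    show "convex {D :: real^'n^'n. pd_mat D}"
      unfolding convex_def using pd_comb by blast
    fix A B :: "real^'n^'n" and u v :: real
    assume A: "A \<in> {D. pd_mat D}" and B: "B \<in> {D. pd_mat D}" and u: "0 \<le> u" and v: "0 \<le> v" and uv: "u + v = 1"
    have "pd_mat (u *\<^sub>R A + v *\<^sub>R B)" using pd_comb A B u v uv by blast
    moreover have "u * ln (det A) + v * ln (det B) \<le> ln (det (u *\<^sub>R A + v *\<^sub>R B))"
      using logdet[of A B u v] A B u v uv by simp
    ultimately show "ln (det (matrix_inv (u *\<^sub>R A + v *\<^sub>R B))) \<le> u * ln (det (matrix_inv A)) + v * ln (det (matrix_inv B))"
      using A B lnid by simp
  qed
  show "convex {D. pd_mat D \<and> loewner_le (integral\<^sup>L M (\<lambda>\<omega>. S \<omega> ** D ** L ** D ** S \<omega>)) D}"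
    unfolding convex_def
  proof (intro ballI allI impI)
    fix A B :: "real^'n^'n" and u v :: real
    assume A: "A \<in> {D. pd_mat D \<and> loewner_le (integral\<^sup>L M (\<lambda>\<omega>. S \<omega> ** D ** L ** D ** S \<omega>)) D}"
      and B: "B \<in> {D. pd_mat D \<and> loewner_le (integral\<^sup>L M (\<lambda>\<omega>. S \<omega> ** D ** L ** D ** S \<omega>)) D}"
      and u: "0 \<le> u" and v: "0 \<le> v" and uv: "u + v = 1"
    define D where "D = u *\<^sub>R A + v *\<^sub>R B"
    have Apd: "pd_mat A" and Bpd: "pd_mat B" using A B by auto
    have Dpd: "pd_mat D" unfolding D_def using pd_comb Apd Bpd u v uv by blast
    have Ds: "transpose D = D" and As: "transpose A = A" and Bs: "transpose B = B"
      using Dpd Apd Bpd by (auto simp: pd_mat_def)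
    let ?Phi = "\<lambda>K. integral\<^sup>L M (\<lambda>\<omega>. S \<omega> ** K ** S \<omega>)"
    have massoc: "S \<omega> ** X ** L ** X ** S \<omega> = S \<omega> ** (X ** L ** X) ** S \<omega>" for \<omega> X
      by (simp add: matrix_mul_assoc)
    let ?psi = "\<lambda>X x. integral\<^sup>L M (\<lambda>\<omega>. (S \<omega> *v x) \<bullet> ((X ** L ** X) *v (S \<omega> *v x)))"
    have PhiA: "psd_mat (A - ?Phi (A ** L ** A))" using A by (simp add: loewner_le_def massoc)
    have PhiB: "psd_mat (B - ?Phi (B ** L ** B))" using B by (simp add: loewner_le_def massoc)
    have qA: "0 \<le> x \<bullet> (A *v x) - ?psi A x" for x
    proof -
      have "0 \<le> x \<bullet> ((A - ?Phi (A ** L ** A)) *v x)" using PhiA unfolding psd_mat_def by blast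
      then show ?thesis by (simp only: matrix_vector_mult_diff_rdistrib inner_diff_right Phi_q[OF Smeas Spsd Sint])
    qed
    have qB: "0 \<le> x \<bullet> (B *v x) - ?psi B x" for x
    proof -
      have "0 \<le> x \<bullet> ((B - ?Phi (B ** L ** B)) *v x)" using PhiB unfolding psd_mat_def by blast
      then show ?thesis by (simp only: matrix_vector_mult_diff_rdistrib inner_diff_right Phi_q[OF Smeas Spsd Sint])
    qed
    have pw: "z \<bullet> ((D ** L ** D) *v z) \<le> u * (z \<bullet> ((A ** L ** A) *v z)) + v * (z \<bullet> ((B ** L ** B) *v z))" for z
    proof -
      have "z \<bullet> ((D ** L ** D) *v z) = (D *v z) \<bullet> (L *v (D *v z))" by (rule q_SKS[OF Ds])
      also have "D *v z = u *\<^sub>R (A *v z) + v *\<^sub>R (B *v z)"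
        by (simp add: D_def matrix_vector_mult_add_rdistrib scaleR_matrix_vector_assoc[symmetric])
      also have "(u *\<^sub>R (A *v z) + v *\<^sub>R (B *v z)) \<bullet> (L *v (u *\<^sub>R (A *v z) + v *\<^sub>R (B *v z)))
          \<le> u * ((A *v z) \<bullet> (L *v (A *v z))) + v * ((B *v z) \<bullet> (L *v (B *v z)))"
        by (rule quad_convex[OF L u v uv])
      also have "\<dots> = u * (z \<bullet> ((A ** L ** A) *v z)) + v * (z \<bullet> ((B ** L ** B) *v z))"
        by (simp add: q_SKS[OF As] q_SKS[OF Bs])
      finally show ?thesis .
    qed
    have qD: "0 \<le> x \<bullet> (D *v x) - ?psi D x" for x
    proof -
      have "?psi D x \<le> integral\<^sup>L M (\<lambda>\<omega>. u * ((S \<omega> *v x) \<bullet> ((A ** L ** A) *v (S \<omega> *v x))) + v * ((S \<omega> *v x) \<bullet> ((B ** L ** B) *v (S \<omega> *v x))))"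
        by (intro integral_mono pw int_q[OF Smeas Spsd Sint] Bochner_Integration.integrable_add integrable_mult_right)
      also have "\<dots> = u * ?psi A x + v * ?psi B x"
        by (simp add: int_q[OF Smeas Spsd Sint])
      finally have "?psi D x \<le> u * ?psi A x + v * ?psi B x" .
      moreover have "x \<bullet> (D *v x) = u * (x \<bullet> (A *v x)) + v * (x \<bullet> (B *v x))"
        unfolding D_def by (rule q_comb)
      moreover have "0 \<le> u * (x \<bullet> (A *v x) - ?psi A x)" using u qA by simp
      moreover have "0 \<le> v * (x \<bullet> (B *v x) - ?psi B x)" using v qB by simp
      ultimately show ?thesis by (simp add: algebra_simps)
    qed
    have "psd_mat (D - ?Phi (D ** L ** D))"
      unfolding psd_mat_def
    proof (intro conjI allI)
      have "transpose (D ** L ** D) = D ** L ** D" by (rule sym_SKS[OF Ds Ls])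
      then show "transpose (D - ?Phi (D ** L ** D)) = D - ?Phi (D ** L ** D)"
        using Phi_sym[OF Smeas Spsd Sint] Ds by (simp add: transpose_diff')
      fix x
      show "0 \<le> x \<bullet> ((D - ?Phi (D ** L ** D)) *v x)"
        using qD[of x] Phi_q[OF Smeas Spsd Sint, of x "D ** L ** D"]
        by (simp add: matrix_vector_mult_diff_rdistrib inner_diff_right)
    qed
    then show "u *\<^sub>R A + v *\<^sub>R B \<in> {D. pd_mat D \<and> loewner_le (integral\<^sup>L M (\<lambda>\<omega>. S \<omega> ** D ** L ** D ** S \<omega>)) D}"
      using Dpd by (simp add: loewner_le_def massoc D_def[symmetric])
  qed
qed

end
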